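(* Let $\lambda>0$ not be a fusion value. Let $\lambda_1$ be the largest fusion value smaller than $\lambda$ (or $\lambda_1=0$ if none exists), and let $C_1,\dots,C_K$ be the clusters of $\mathbf x^*(\lambda_1)$ (all singletons if $\lambda_1=0$). Let $(\hat{\mathbf x}_1,\dots,\hat{\mathbf x}_K)$ be the minimizer of the reduced problem (R$_\lambda$). Then $\hat{\mathbf x}_k\ne\hat{\mathbf x}_{k'}$ for all $k\ne k'$ in $[K]$.
   Context: Data: $n\ge2$, $d\ge1$, $\mathbf a_1,\dots,\mathbf a_n\in\mathbb R^d$, weights $r_i>0$. For $\lambda\ge0$, (P$_\lambda$): minimize $\frac12\sum_ir_i\|\mathbf x_i-\mathbf a_i\|^2+\lambda\sum_{i<j}r_ir_j\|\mathbf x_i-\mathbf x_j\|$ over $(\mathbb R^d)^n$, unique minimizer $\mathbf x^*(\lambda)$; the clusters of $\mathbf x^*(\lambda)$ are the classes of $i\sim j\iff\mathbf x_i^*(\lambda)=\mathbf x_j^*(\lambda)$. A value $\lambda_0>0$ is a fusion value if there are $i\ne j$ with $\mathbf x_i^*(\lambda_0)=\mathbf x_j^*(\lambda_0)$ but $\mathbf x_i^*(\lambda)\ne\mathbf x_j^*(\lambda)$ for all $\lambda\in[0,\lambda_0)$ (there are finitely many). Given a partition $C_1,\dots,C_K$ of $[n]$, set $r'_k:=\sum_{i\in C_k}r_i$, $\bar{\mathbf a}_k:=\frac1{r'_k}\sum_{i\in C_k}r_i\mathbf a_i$, and the reduced problem (R$_\lambda$): minimize over $\mathbf x_1,\dots,\mathbf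 x_K\in\mathbb R^d$ the function $\frac12\sum_kr'_k\|\mathbf x_k-\bar{\mathbf a}_k\|^2+\lambda\sum_{k<k'}r'_kr'_{k'}\|\mathbf x_k-\mathbf x_{k'}\|$. *)

theory Defs
  imports "HOL-Analysis.Analysis" "HOL-Library.FuncSet"
begin

definition cc_obj :: "nat set \<Rightarrow> (nat \<Rightarrow> real) \<Rightarrow> (nat \<Rightarrow> 'a::real_normed_vector)
    \<Rightarrow> real \<Rightarrow> (nat \<Rightarrow> 'a) \<Rightarrow> real" where
  "cc_obj I w c lam x =
     (1/2) * (\<Sum>i\<in>I. w i * (norm (x i - c i))^2)
     + lam * (\<Sum>(i,j)\<in>{(i,j). i \<in> I \<and> j \<in> I \<and> i < j}. w i * w j * norm (x i - x j))"

definition cc_sol :: "nat \<Rightarrow> (nat \<Rightarrow> real) \<Rightarrow> (nat \<Rightarrow> 'a::real_normed_vector) \<Rightarrow> real \<Rightarrow> (nat \<Rightarrow> 'a)" where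
  "cc_sol n r a lam = (THE x. x \<in> {..<n} \<rightarrow>\<^sub>E UNIV \<and>
       (\<forall>y. cc_obj {..<n} r a lam x \<le> cc_obj {..<n} r a lam y))"

definition fusion_value :: "nat \<Rightarrow> (nat \<Rightarrow> real) \<Rightarrow> (nat \<Rightarrow> 'a::real_normed_vector) \<Rightarrow> real \<Rightarrow> bool" where
  "fusion_value n r a lam0 \<longleftrightarrow> lam0 > 0 \<and>
     (\<exists>i<n. \<exists>j<n. i \<noteq> j \<and> cc_sol n r a lam0 i = cc_sol n r a lam0 j \<and>
        (\<forall>lam. 0 \<le> lam \<and> lam < lam0 \<longrightarrow> cc_sol n r a lam i \<noteq> cc_sol n r a lam j))"

definition clusters :: "nat \<Rightarrow> (nat \<Rightarrow> 'a) \<Rightarrow> nat set set" where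
  "clusters n x = {..<n} // {(i,j). i < n \<and> j < n \<and> x i = x j}"

definition red_w :: "(nat \<Rightarrow> real) \<Rightarrow> (nat \<Rightarrow> nat set) \<Rightarrow> nat \<Rightarrow> real" where
  "red_w r C k = (\<Sum>i\<in>C k. r i)"

definition red_a :: "(nat \<Rightarrow> real) \<Rightarrow> (nat \<Rightarrow> 'a::real_vector) \<Rightarrow> (nat \<Rightarrow> nat set) \<Rightarrow> nat \<Rightarrow> 'a" where
  "red_a r a C k = (1 / red_w r C k) *\<^sub>R (\<Sum>i\<in>C k. r i *\<^sub>R a i)"

end

theory Submission imports Defs begin

definition Dsum :: "nat set \<Rightarrow> (nat \<Rightarrow> real) \<Rightarrow> (nat \<Rightarrow> 'a::real_normed_vector) \<Rightarrow> real" where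
  "Dsum I w x = (\<Sum>i\<in>I. \<Sum>j\<in>I. w i * w j * norm (x i - x j))"

definition Qsum :: "nat set \<Rightarrow> (nat \<Rightarrow> real) \<Rightarrow> (nat \<Rightarrow> 'a::real_normed_vector) \<Rightarrow> (nat \<Rightarrow> 'a) \<Rightarrow> real" where
  "Qsum I w c x = (\<Sum>i\<in>I. w i * (norm (x i - c i))^2)"

lemma pair_sum:
  assumes "finite I"
  shows "(\<Sum>(i,j)\<in>{(i,j). i \<in> I \<and> j \<in> I \<and> i < j}. f i j) = (\<Sum>i\<in>I. \<Sum>j\<in>{j\<in>I. i<j}. f i j)"
proof -
  have "{(i,j). i \<in> I \<and> j \<in> I \<and> i < j} = Sigma I (\<lambda>i. {j\<in>I. i<j})" by auto
  then show ?thesis using assms by (simp add: sum.Sigma)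
qed

lemma full_sum_split:
  fixes f :: "nat \<Rightarrow> nat \<Rightarrow> real"
  assumes "finite I" and sym: "\<And>i j. f i j = f j i" and diag: "\<And>i. f i i = 0"
  shows "(\<Sum>i\<in>I. \<Sum>j\<in>I. f i j) = 2 * (\<Sum>i\<in>I. \<Sum>j\<in>{j\<in>I. i<j}. f i j)"
proof -
  have "(\<Sum>j\<in>I. f i j) = (\<Sum>j\<in>{j\<in>I. i<j}. f i j) + (\<Sum>j\<in>{j\<in>I. j<i}. f i j)" if "i \<in> I" for i
  proof -
    have "I = {j\<in>I. i<j} \<union> {j\<in>I. j<i} \<union> {j\<in>I. j = i}" by auto
    then have "(\<Sum>j\<in>I. f i j) = (\<Sum>j\<in>{j\<in>I. i<j} \<union> {j\<in>I. j<i} \<union> {j\<in>I. j = i}. f i j)" by simp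
    also have "\<dots> = (\<Sum>j\<in>{j\<in>I. i<j}. f i j) + (\<Sum>j\<in>{j\<in>I. j<i}. f i j) + (\<Sum>j\<in>{j\<in>I. j = i}. f i j)"
      using assms(1) by (subst sum.union_disjoint, auto)+
    also have "(\<Sum>j\<in>{j\<in>I. j = i}. f i j) = 0" by (rule sum.neutral) (auto simp: diag)
    finally show ?thesis by simp
  qed
  then have "(\<Sum>i\<in>I. \<Sum>j\<in>I. f i j) = (\<Sum>i\<in>I. \<Sum>j\<in>{j\<in>I. i<j}. f i j) + (\<Sum>i\<in>I. \<Sum>j\<in>{j\<in>I. j<i}. f i j)"
    by (simp add: sum.distrib)
  also have "(\<Sum>i\<in>I. \<Sum>j\<in>{j\<in>I. j<i}. f i j) = (\<Sum>j\<in>I. \<Sum>i\<in>{i\<in>I. j<i}. f i j)"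
    using sum.swap_restrict[OF assms(1) assms(1), of "\<lambda>i j. f i j" "\<lambda>i j. j < i"] by simp
  also have "\<dots> = (\<Sum>i\<in>I. \<Sum>j\<in>{j\<in>I. i<j}. f i j)" by (simp add: sym)
  finally show ?thesis by simp
qed

lemma obj_eq:
  assumes "finite I"
  shows "cc_obj I w c lam x = Qsum I w c x / 2 + lam / 2 * Dsum I w x"
proof -
  have "Dsum I w x = 2 * (\<Sum>i\<in>I. \<Sum>j\<in>{j\<in>I. i<j}. w i * w j * norm (x i - x j))"
    unfolding Dsum_def by (rule full_sum_split[OF assms]) (auto simp: norm_minus_commute)
  then show ?thesis unfolding cc_obj_def Qsum_def using pair_sum[OF assms, of "\<lambda>i j. w i * w j * norm (x i - x j)"]
    by simp
qed

lemma Dsum_nonneg: "(\<And>i. i \<in> I \<Longrightarrow> w i \<ge> 0) \<Longrightarrow> Dsum I w x \<ge> 0"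
  unfolding Dsum_def by (intro sum_nonneg) auto

lemma Qsum_cong: "(\<And>i. i \<in> I \<Longrightarrow> x i = y i) \<Longrightarrow> Qsum I w c x = Qsum I w c y"
  unfolding Qsum_def by (rule sum.cong) auto
lemma Dsum_cong: "(\<And>i. i \<in> I \<Longrightarrow> x i = y i) \<Longrightarrow> Dsum I w x = Dsum I w y"
  unfolding Dsum_def by (intro sum.cong) auto
lemma obj_cong: "finite I \<Longrightarrow> (\<And>i. i \<in> I \<Longrightarrow> x i = y i) \<Longrightarrow> cc_obj I w c lam x = cc_obj I w c lam y"
  by (simp add: obj_eq Qsum_cong[of I x y] Dsum_cong[of I x y])

lemma norm_sq_expand:
  fixes u d :: "'a::real_inner"
  shows "(norm (u + s *\<^sub>R d))^2 = (norm u)^2 + 2 * s * (u \<bullet> d) + s^2 * (norm d)^2"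
  unfolding power2_norm_eq_inner by (simp add: inner_add_left inner_add_right inner_commute algebra_simps power2_eq_square)

lemma eps_lemma:
  fixes A B M :: real
  assumes "M \<ge> 0" "\<And>s. 0 < s \<Longrightarrow> s \<le> 1 \<Longrightarrow> A \<le> B + s * M"
  shows "A \<le> B"
proof (rule field_le_epsilon)
  fix e :: real assume e: "e > 0"
  define s where "s = min 1 (e / (M+1))"
  have s: "0 < s" "s \<le> 1" using e assms(1) by (auto simp: s_def)
  have "s * M \<le> e / (M+1) * M" using assms(1) by (intro mult_right_mono) (auto simp: s_def)
  also have "\<dots> \<le> e" using e assms(1) by (simp add: field_simps)
  finally show "A \<le> B + e" using assms(2)[OF s] by linarith
qed

lemma Qsum_line:
  fixes x y c :: "nat \<Rightarrow> 'a::real_inner"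
  shows "Qsum I w c (\<lambda>i. x i + s *\<^sub>R (y i - x i)) = Qsum I w c x
     + 2 * s * (\<Sum>i\<in>I. w i * ((x i - c i) \<bullet> (y i - x i))) + s^2 * (\<Sum>i\<in>I. w i * (norm (y i - x i))^2)"
proof -
  have "Qsum I w c (\<lambda>i. x i + s *\<^sub>R (y i - x i)) = (\<Sum>i\<in>I. w i * (norm ((x i - c i) + s *\<^sub>R (y i - x i)))^2)"
  proof -
    have e: "x i + s *\<^sub>R (y i - x i) - c i = (x i - c i) + s *\<^sub>R (y i - x i)" for i
      by (simp add: algebra_simps)
    show ?thesis unfolding Qsum_def by (simp only: e)
  qed
  also have "\<dots> = (\<Sum>i\<in>I. w i * (norm (x i - c i))^2 + 2 * s * (w i * ((x i - c i) \<bullet> (y i - x i))) + s^2 * (w i * (norm (y i - x i))^2))"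
    by (intro sum.cong refl, simp only: norm_sq_expand) algebra
  finally show ?thesis by (simp add: sum.distrib Qsum_def sum_distrib_left)
qed

lemma Dsum_line:
  fixes x y :: "nat \<Rightarrow> 'a::real_normed_vector"
  assumes "\<And>i. i \<in> I \<Longrightarrow> w i \<ge> 0" "0 \<le> s" "s \<le> 1"
  shows "Dsum I w (\<lambda>i. x i + s *\<^sub>R (y i - x i)) \<le> (1 - s) * Dsum I w x + s * Dsum I w y"
proof -
  have "w i * w j * norm ((x i + s *\<^sub>R (y i - x i)) - (x j + s *\<^sub>R (y j - x j)))
     \<le> (1 - s) * (w i * w j * norm (x i - x j)) + s * (w i * w j * norm (y i - y j))"
    if "i \<in> I" "j \<in> I" for i j
  proof -
    have eq: "(x i + s *\<^sub>R (y i - x i)) - (x j + s *\<^sub>R (y j - x j)) = (1 - s) *\<^sub>R (x i - x j) + s *\<^sub>R (y i - y j)"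
      by (simp add: algebra_simps)
    have "norm ((1 - s) *\<^sub>R (x i - x j) + s *\<^sub>R (y i - y j)) \<le> norm ((1 - s) *\<^sub>R (x i - x j)) + norm (s *\<^sub>R (y i - y j))"
      by (rule norm_triangle_ineq)
    also have "\<dots> = (1 - s) * norm (x i - x j) + s * norm (y i - y j)"
      using assms(2,3) by simp
    finally have nb: "norm ((1 - s) *\<^sub>R (x i - x j) + s *\<^sub>R (y i - y j)) \<le> (1 - s) * norm (x i - x j) + s * norm (y i - y j)" .
    have "w i * w j \<ge> 0" using assms(1) that by simp
    then have "w i * w j * norm ((1 - s) *\<^sub>R (x i - x j) + s *\<^sub>R (y i - y j)) \<le> w i * w j * ((1 - s) * norm (x i - x j) + s * norm (y i - y j))"
      by (rule mult_left_mono[OF nb])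
    then show ?thesis unfolding eq by (simp add: algebra_simps)
  qed
  then show ?thesis unfolding Dsum_def
    by (simp add: sum_distrib_left sum.distrib[symmetric] sum_mono)
qed

lemma quad_growth:
  fixes x y a :: "nat \<Rightarrow> 'a::real_inner"
  assumes I: "finite I" and w: "\<And>i. i \<in> I \<Longrightarrow> w i \<ge> 0" and mu: "mu \<ge> 0"
    and min: "\<And>z. cc_obj I w a mu x \<le> cc_obj I w a mu z"
  shows "cc_obj I w a mu y - cc_obj I w a mu x \<ge> (\<Sum>i\<in>I. w i * (norm (y i - x i))^2) / 2"
proof -
  define L where "L = (\<Sum>i\<in>I. w i * ((x i - a i) \<bullet> (y i - x i)))"
  define N where "N = (\<Sum>i\<in>I. w i * (norm (y i - x i))^2)"
  have N: "N \<ge> 0" unfolding N_def using w by (intro sum_nonneg) auto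
  have key: "0 \<le> L + mu/2 * (Dsum I w y - Dsum I w x) + s * (N/2)" if s: "0 < s" "s \<le> 1" for s
  proof -
    let ?z = "\<lambda>i. x i + s *\<^sub>R (y i - x i)"
    have "cc_obj I w a mu x \<le> cc_obj I w a mu ?z" by (rule min)
    also have "\<dots> = (Qsum I w a x + 2 * s * L + s^2 * N) / 2 + mu/2 * Dsum I w ?z"
      by (simp add: obj_eq[OF I] Qsum_line L_def N_def)
    also have "\<dots> \<le> (Qsum I w a x + 2 * s * L + s^2 * N) / 2 + mu/2 * ((1 - s) * Dsum I w x + s * Dsum I w y)"
      using Dsum_line[OF w, where s=s and x=x and y=y] s mu by (intro add_left_mono mult_left_mono) auto
    finally have "0 \<le> s * (L + mu/2 * (Dsum I w y - Dsum I w x) + s * (N/2))"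
      by (simp add: obj_eq[OF I] algebra_simps power2_eq_square) argo
    then show ?thesis using s by (simp add: zero_le_mult_iff)
  qed
  have "0 \<le> L + mu/2 * (Dsum I w y - Dsum I w x)"
    using eps_lemma[of "N/2" 0 "L + mu/2 * (Dsum I w y - Dsum I w x)"] key N by force
  moreover have "Qsum I w a y = Qsum I w a x + 2 * L + N"
    using Qsum_line[where s=1 and x=x and y=y and I=I and w=w and c=a] by (simp add: L_def N_def)
  ultimately show ?thesis by (simp add: obj_eq[OF I] N_def algebra_simps) argo
qed

lemma cont_coord [continuous_intros]: "continuous_on S (\<lambda>y::nat \<Rightarrow> 'a::topological_space. y i)"
  by (rule continuous_on_subset[OF continuous_on_product_coordinates]) simp

lemma Qsum_ge_single:
  assumes "finite I" "\<And>i. i \<in> I \<Longrightarrow> w i \<ge> 0" "k \<in> I"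
  shows "w k * (norm (x k - c k))^2 \<le> Qsum I w c x"
  unfolding Qsum_def using assms by (intro member_le_sum) auto

lemma exists_min:
  fixes a :: "nat \<Rightarrow> 'a::euclidean_space"
  assumes r: "\<forall>i<n. r i > 0" and mu: "mu \<ge> 0"
  shows "\<exists>x \<in> {..<n} \<rightarrow>\<^sub>E UNIV. \<forall>y. cc_obj {..<n} r a mu x \<le> cc_obj {..<n} r a mu y"
proof -
  define f where "f = cc_obj {..<n} r a mu"
  define a0 where "a0 = restrict a {..<n}"
  define P0 where "P0 = f a0"
  define \<rho> where "\<rho> = 1 + (\<Sum>i<n. 2 * P0 / r i)"
  define S where "S = (\<lambda>i. if i < n then cball (a i) \<rho> else {undefined})"
  define T where "T = PiE UNIV S"
  have Dn: "Dsum {..<n} r y \<ge> 0" for y using r by (intro Dsum_nonneg) auto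
  have Qn: "Qsum {..<n} r a y \<ge> 0" for y unfolding Qsum_def using r by (intro sum_nonneg) (auto intro: less_imp_le)
  have fge: "f y \<ge> r i * (norm (y i - a i))^2 / 2" if "i < n" for y i
  proof -
    have "r i * (norm (y i - a i))^2 \<le> Qsum {..<n} r a y"
      using r that by (intro Qsum_ge_single) (auto intro: less_imp_le)
    moreover have "mu * Dsum {..<n} r y \<ge> 0" using Dn[of y] mu by simp
    ultimately show ?thesis unfolding f_def obj_eq[OF finite_lessThan] by linarith
  qed
  have P0: "P0 \<ge> 0" unfolding P0_def f_def obj_eq[OF finite_lessThan] using Dn[of a0] Qn[of a0] mu by simp
  have rho1: "\<rho> \<ge> 1" unfolding \<rho>_def using P0 r by (auto intro!: sum_nonneg)
  have rho2: "2 * P0 / r i \<le> \<rho>" if "i < n" for i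
  proof -
    have "2 * P0 / r i \<le> (\<Sum>i<n. 2 * P0 / r i)"
      using that P0 r by (intro member_le_sum) (auto intro!: divide_nonneg_pos)
    then show ?thesis unfolding \<rho>_def by simp
  qed
  have cT: "compact T"
  proof -
    have "\<forall>i\<in>UNIV. compactin euclidean (S i)" by (simp add: S_def)
    then have "compactin (product_topology (\<lambda>i. euclidean) UNIV) (PiE UNIV S)"
      using compactin_PiE by blast
    then show ?thesis unfolding T_def euclidean_product_topology by simp
  qed
  have a0T: "a0 \<in> T" unfolding T_def S_def a0_def using rho1 by (auto simp: PiE_iff)
  have cf: "continuous_on T f"
    unfolding f_def obj_eq[OF finite_lessThan] Qsum_def Dsum_def by (intro continuous_intros) auto
  obtain x where xT: "x \<in> T" and xmin: "\<And>y. y \<in> T \<Longrightarrow> f x \<le> f y"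
    using continuous_attains_inf[OF cT _ cf] a0T by blast
  have "x \<in> {..<n} \<rightarrow>\<^sub>E UNIV" using xT unfolding T_def S_def by (auto simp: PiE_iff extensional_def) (metis singletonD)
  moreover have "f x \<le> f y" for y
  proof (cases "\<forall>i<n. y i \<in> cball (a i) \<rho>")
    case True
    then have "restrict y {..<n} \<in> T" unfolding T_def S_def by (auto simp: PiE_iff)
    then have "f x \<le> f (restrict y {..<n})" by (rule xmin)
    also have "f (restrict y {..<n}) = f y" unfolding f_def by (rule obj_cong) auto
    finally show ?thesis .
  next
    case False
    then obtain i where i: "i < n" "dist (a i) (y i) > \<rho>" by auto
    have "norm (y i - a i) > \<rho>" using i by (simp add: dist_norm norm_minus_commute)
    then have "(norm (y i - a i))^2 > \<rho>^2" using rho1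
      by (intro power_strict_mono) auto
    moreover have "\<rho>^2 \<ge> \<rho>" using rho1 by (simp add: power2_eq_square)
    ultimately have "(norm (y i - a i))^2 > 2 * P0 / r i" using rho2[OF i(1)] by linarith
    then have "r i * (norm (y i - a i))^2 > 2 * P0" using r i(1)
      by (simp add: pos_divide_less_eq mult.commute)
    then have "f y > P0" using fge[OF i(1), of y] by linarith
    moreover have "f x \<le> P0" unfolding P0_def by (rule xmin[OF a0T])
    ultimately show ?thesis by linarith
  qed
  ultimately show ?thesis unfolding f_def by blast
qed

lemma min_unique:
  fixes x y a :: "nat \<Rightarrow> 'a::real_inner"
  assumes I: "finite I" and w: "\<And>i. i \<in> I \<Longrightarrow> w i > 0" and mu: "mu \<ge> 0"
    and mx: "\<And>z. cc_obj I w a mu x \<le> cc_obj I w a mu z"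
    and my: "\<And>z. cc_obj I w a mu y \<le> cc_obj I w a mu z"
    and i: "i \<in> I"
  shows "x i = y i"
proof -
  have "(\<Sum>i\<in>I. w i * (norm (y i - x i))^2) / 2 \<le> 0"
    using quad_growth[OF I _ mu mx, of y] w my[of x] by (simp add: less_imp_le)
  then have "(\<Sum>i\<in>I. w i * (norm (y i - x i))^2) = 0"
    using w by (smt (verit) field_sum_of_halves mult_nonneg_nonneg sum_nonneg zero_le_power2)
  then have "w i * (norm (y i - x i))^2 = 0"
    using sum_nonneg_eq_0_iff[OF I, of "\<lambda>i. w i * (norm (y i - x i))^2"] w i
    by (simp add: less_imp_le)
  then show ?thesis using w[OF i] by simp
qed

definition is_min :: "nat \<Rightarrow> (nat \<Rightarrow> real) \<Rightarrow> (nat \<Rightarrow> 'a::real_normed_vector) \<Rightarrow> real \<Rightarrow> (nat \<Rightarrow> 'a) \<Rightarrow> bool" where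
  "is_min n r a mu x \<longleftrightarrow> (\<forall>y. cc_obj {..<n} r a mu x \<le> cc_obj {..<n} r a mu y)"

lemma sol_min:
  fixes a :: "nat \<Rightarrow> 'a::euclidean_space"
  assumes r: "\<forall>i<n. r i > 0" and mu: "mu \<ge> 0"
  shows "is_min n r a mu (cc_sol n r a mu)"
proof -
  have ex: "\<exists>!x. x \<in> {..<n} \<rightarrow>\<^sub>E UNIV \<and> (\<forall>y. cc_obj {..<n} r a mu x \<le> cc_obj {..<n} r a mu y)"
  proof (rule ex_ex1I)
    show "\<exists>x. x \<in> {..<n} \<rightarrow>\<^sub>E UNIV \<and> (\<forall>y. cc_obj {..<n} r a mu x \<le> cc_obj {..<n} r a mu y)"
      using exists_min[OF r mu] by blast
  next
    fix x y assume x: "x \<in> {..<n} \<rightarrow>\<^sub>E UNIV \<and> (\<forall>y. cc_obj {..<n} r a mu x \<le> cc_obj {..<n} r a mu y)"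
      and y: "y \<in> {..<n} \<rightarrow>\<^sub>E UNIV \<and> (\<forall>z. cc_obj {..<n} r a mu y \<le> cc_obj {..<n} r a mu z)"
    have "x i = y i" if "i < n" for i
      using min_unique[of "{..<n}" r mu a x y i] x y r mu that by auto
    then show "x = y" using x y by (intro extensionalityI[of _ "{..<n}"]) (auto simp: PiE_iff)
  qed
  show ?thesis unfolding is_min_def cc_sol_def using theI'[OF ex] by blast
qed

lemma cont_bound:
  fixes x y a :: "nat \<Rightarrow> 'a::real_inner"
  assumes I: "finite I" and w: "\<And>i. i \<in> I \<Longrightarrow> w i \<ge> 0" and mu: "mu \<ge> 0" and nu: "mu \<le> nu"
    and mx: "\<And>z. cc_obj I w a mu x \<le> cc_obj I w a mu z"
    and my: "\<And>z. cc_obj I w a nu y \<le> cc_obj I w a nu z"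
  shows "(\<Sum>i\<in>I. w i * (norm (y i - x i))^2) \<le> (nu - mu) * Dsum I w x"
proof -
  have 1: "cc_obj I w a mu y - cc_obj I w a mu x \<ge> (\<Sum>i\<in>I. w i * (norm (y i - x i))^2) / 2"
    by (rule quad_growth[OF I w mu mx])
  have 2: "cc_obj I w a nu x - cc_obj I w a nu y \<ge> (\<Sum>i\<in>I. w i * (norm (x i - y i))^2) / 2"
    by (rule quad_growth[OF I w _ my]) (use mu nu in auto)
  have 3: "(\<Sum>i\<in>I. w i * (norm (x i - y i))^2) = (\<Sum>i\<in>I. w i * (norm (y i - x i))^2)"
    by (simp add: norm_minus_commute)
  have "Dsum I w y \<ge> 0" using w by (rule Dsum_nonneg)
  then have "(nu - mu) * Dsum I w y \<ge> 0" using nu by simp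
  moreover have "(\<Sum>i\<in>I. w i * (norm (y i - x i))^2) \<ge> 0" using w by (intro sum_nonneg) auto
  ultimately show ?thesis using 1 2 3 unfolding obj_eq[OF I] by (simp add: algebra_simps)
qed

lemma nb:
  fixes v h :: "'a::real_inner"
  assumes N: "norm v > 0"
  shows "norm (v + h) \<le> norm v + (h \<bullet> v) / norm v + (norm h)^2 / (2 * norm v)"
proof -
  define N where "N = norm v"
  define t where "t = (h \<bullet> v) / N + (norm h)^2 / (2 * N)"
  have Np: "N > 0" using N by (simp add: N_def)
  have cs: "h \<bullet> v \<ge> - (norm h * N)"
    using Cauchy_Schwarz_ineq2[of h v] unfolding N_def by linarith
  have "(h \<bullet> v) / N \<ge> - norm h" using cs Np by (simp add: le_divide_eq)
  then have "N + t \<ge> N - norm h + (norm h)^2 / (2 * N)"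
    unfolding t_def by linarith
  also have "N - norm h + (norm h)^2 / (2 * N) = ((N - norm h)^2 + N^2) / (2 * N)"
    using Np by (simp add: field_simps power2_eq_square)
  also have "\<dots> \<ge> 0" using Np by (intro divide_nonneg_pos) auto
  finally have R0: "N + t \<ge> 0" .
  have "(norm (v + h))^2 = N^2 + 2 * (h \<bullet> v) + (norm h)^2"
    unfolding N_def power2_norm_eq_inner by (simp add: inner_add_left inner_add_right inner_commute)
  also have "\<dots> = N^2 + 2 * N * t" using Np unfolding t_def by (simp add: field_simps power2_eq_square)
  also have "\<dots> \<le> (N + t)^2" by (simp add: power2_eq_square algebra_simps)
  finally have "(norm (v + h))^2 \<le> (N + t)^2" .
  then have "norm (v + h) \<le> N + t" using R0 by (rule power2_le_imp_le)
  then show ?thesis unfolding t_def N_def by (simp add: add.assoc)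
qed

lemma cross:
  fixes v :: "'a::real_inner" and d :: "nat \<Rightarrow> 'a"
  assumes B: "finite B" and N: "norm v > 0" and w: "\<And>i. i \<in> B \<Longrightarrow> w i \<ge> 0"
    and sd: "(\<Sum>i\<in>B. w i *\<^sub>R d i) = 0" and s: "s \<ge> 0"
  shows "(\<Sum>i\<in>B. w i * norm (v + s *\<^sub>R d i)) \<le> (\<Sum>i\<in>B. w i) * norm v
           + s^2 * (\<Sum>i\<in>B. w i * (norm (d i))^2) / (2 * norm v)"
proof -
  have "(\<Sum>i\<in>B. w i * norm (v + s *\<^sub>R d i)) \<le>
     (\<Sum>i\<in>B. w i * (norm v + ((s *\<^sub>R d i) \<bullet> v) / norm v + (norm (s *\<^sub>R d i))^2 / (2 * norm v)))"
    by (intro sum_mono mult_left_mono nb[OF N]) (auto intro: w)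
  also have "\<dots> = (\<Sum>i\<in>B. w i) * norm v + (s / norm v) * ((\<Sum>i\<in>B. w i *\<^sub>R d i) \<bullet> v)
      + s^2 * (\<Sum>i\<in>B. w i * (norm (d i))^2) / (2 * norm v)"
    using s by (simp add: sum.distrib sum_distrib_left sum_distrib_right sum_divide_distrib inner_sum_left
        algebra_simps power2_eq_square)
  also have "\<dots> = (\<Sum>i\<in>B. w i) * norm v + s^2 * (\<Sum>i\<in>B. w i * (norm (d i))^2) / (2 * norm v)"
    using sd by simp
  finally show ?thesis .
qed

lemma avg_le:
  fixes yb u :: "'a::real_normed_vector"
  assumes B: "finite B" and w: "\<And>i. i \<in> B \<Longrightarrow> w i \<ge> 0"
    and yb: "(\<Sum>i\<in>B. w i) *\<^sub>R yb = (\<Sum>i\<in>B. w i *\<^sub>R y i)"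
  shows "(\<Sum>i\<in>B. w i * norm (yb - u)) \<le> (\<Sum>i\<in>B. w i * norm (y i - u))"
proof -
  have wB: "(\<Sum>i\<in>B. w i) \<ge> 0" using w by (intro sum_nonneg) auto
  have "(\<Sum>i\<in>B. w i * norm (yb - u)) = norm ((\<Sum>i\<in>B. w i) *\<^sub>R (yb - u))"
    using wB by (simp add: sum_distrib_right)
  also have "(\<Sum>i\<in>B. w i) *\<^sub>R (yb - u) = (\<Sum>i\<in>B. w i *\<^sub>R (y i - u))"
    using yb by (simp add: scaleR_diff_right scaleR_sum_left sum_subtractf)
  also have "norm \<dots> \<le> (\<Sum>i\<in>B. norm (w i *\<^sub>R (y i - u)))" by (rule norm_sum)
  also have "\<dots> = (\<Sum>i\<in>B. w i * norm (y i - u))" using w by (intro sum.cong) auto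
  finally show ?thesis .
qed

lemma dsplit:
  fixes f :: "nat \<Rightarrow> nat \<Rightarrow> real"
  assumes I: "finite I" and B: "B \<subseteq> I"
  shows "(\<Sum>i\<in>I. \<Sum>j\<in>I. f i j) = (\<Sum>i\<in>B. \<Sum>j\<in>B. f i j) + (\<Sum>i\<in>B. \<Sum>j\<in>I-B. f i j)
     + (\<Sum>i\<in>I-B. \<Sum>j\<in>B. f i j) + (\<Sum>i\<in>I-B. \<Sum>j\<in>I-B. f i j)"
proof -
  have inn: "(\<Sum>j\<in>I. f i j) = (\<Sum>j\<in>I-B. f i j) + (\<Sum>j\<in>B. f i j)" for i
    using sum.subset_diff[OF B I] by simp
  have "(\<Sum>i\<in>I. \<Sum>j\<in>I. f i j) = (\<Sum>i\<in>I-B. \<Sum>j\<in>I. f i j) + (\<Sum>i\<in>B. \<Sum>j\<in>I. f i j)"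
    using sum.subset_diff[OF B I] by simp
  then show ?thesis unfolding inn by (simp add: sum.distrib)
qed

lemma dsplit2:
  fixes u :: "nat \<Rightarrow> 'a::real_normed_vector"
  assumes I: "finite I" and B: "B \<subseteq> I"
  shows "Dsum I w u = (\<Sum>i\<in>B. \<Sum>j\<in>B. w i * w j * norm (u i - u j))
     + 2 * (\<Sum>j\<in>I-B. w j * (\<Sum>i\<in>B. w i * norm (u i - u j)))
     + (\<Sum>i\<in>I-B. \<Sum>j\<in>I-B. w i * w j * norm (u i - u j))"
proof -
  have 1: "(\<Sum>i\<in>B. \<Sum>j\<in>I-B. w i * w j * norm (u i - u j)) = (\<Sum>j\<in>I-B. w j * (\<Sum>i\<in>B. w i * norm (u i - u j)))"
    by (subst sum.swap) (simp add: sum_distrib_left mult_ac)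
  have 2: "(\<Sum>i\<in>I-B. \<Sum>j\<in>B. w i * w j * norm (u i - u j)) = (\<Sum>j\<in>I-B. w j * (\<Sum>i\<in>B. w i * norm (u i - u j)))"
    by (simp add: sum_distrib_left mult_ac norm_minus_commute)
  show ?thesis unfolding Dsum_def dsplit[OF I B] 1 2 by simp
qed

lemma sum_if_sub:
  fixes f :: "nat \<Rightarrow> real"
  assumes "finite I" "B \<subseteq> I"
  shows "(\<Sum>k\<in>I. if k \<in> B then f k else 0) = (\<Sum>k\<in>B. f k)"
proof -
  have "I \<inter> B = B" using assms(2) by auto
  then show ?thesis using sum.inter_restrict[OF assms(1), of f B] by simp
qed

lemma no_split:
  fixes x y a :: "nat \<Rightarrow> 'a::real_inner"
  assumes I: "finite I" and w: "\<And>i. i \<in> I \<Longrightarrow> w i > 0" and mu: "0 \<le> mu" and nu: "mu \<le> nu"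
    and mx: "\<And>z. cc_obj I w a mu x \<le> cc_obj I w a mu z"
    and my: "\<And>z. cc_obj I w a nu y \<le> cc_obj I w a nu z"
    and i0: "i0 \<in> I" and j0: "j0 \<in> I" and eq: "x i0 = x j0"
  shows "y i0 = y j0"
proof -
  define z where "z = x i0"
  define B where "B = {k\<in>I. x k = z}"
  have BI: "B \<subseteq> I" and fB: "finite B" and i0B: "i0 \<in> B" and j0B: "j0 \<in> B"
    using I i0 j0 eq by (auto simp: B_def z_def intro: finite_subset)
  have xB: "\<And>k. k \<in> B \<Longrightarrow> x k = z" and xnB: "\<And>k. k \<in> I - B \<Longrightarrow> x k \<noteq> z"
    by (auto simp: B_def)
  have w0: "\<And>i. i \<in> I \<Longrightarrow> w i \<ge> 0" using w by (simp add: less_imp_le)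
  have w0B: "\<And>i. i \<in> B \<Longrightarrow> w i \<ge> 0" using w0 BI by auto
  define wB where "wB = sum w B"
  have wB: "wB > 0" unfolding wB_def using fB i0B w BI by (intro sum_pos) auto
  define yb where "yb = (1/wB) *\<^sub>R (\<Sum>k\<in>B. w k *\<^sub>R y k)"
  have ybeq: "wB *\<^sub>R yb = (\<Sum>k\<in>B. w k *\<^sub>R y k)" using wB by (simp add: yb_def)
  define \<delta> where "\<delta> = (\<lambda>k. y k - yb)"
  have sd: "(\<Sum>k\<in>B. w k *\<^sub>R \<delta> k) = 0"
    using ybeq by (simp add: \<delta>_def scaleR_diff_right sum_subtractf scaleR_sum_left[symmetric] wB_def)
  define A where "A = (\<Sum>k\<in>B. w k * (\<delta> k \<bullet> a k))"
  define W where "W = (\<Sum>i\<in>B. \<Sum>j\<in>B. w i * w j * norm (y i - y j))"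
  define NB where "NB = (\<Sum>k\<in>B. w k * (norm (\<delta> k))^2)"
  have Wn: "W \<ge> 0" unfolding W_def using w0B by (intro sum_nonneg) auto
  have NBn: "NB \<ge> 0" unfolding NB_def using w0B by (intro sum_nonneg) auto
  have zterm: "(\<Sum>k\<in>B. w k * ((u - a k) \<bullet> \<delta> k)) = - A" for u
  proof -
    have "(\<Sum>k\<in>B. w k * ((u - a k) \<bullet> \<delta> k)) = u \<bullet> (\<Sum>k\<in>B. w k *\<^sub>R \<delta> k) - A"
      by (simp add: A_def inner_diff_left inner_sum_right algebra_simps sum_subtractf inner_commute)
    then show ?thesis using sd by simp
  qed
  have FO: "A \<le> mu/2 * W"
  proof -
    define K where "K = (\<Sum>j\<in>I-B. w j * (NB / (2 * norm (z - x j))))"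
    have Kn: "K \<ge> 0" unfolding K_def using w0 NBn by (intro sum_nonneg) auto
    have step: "A \<le> mu/2 * W + s * (NB/2 + mu * K)" if s: "0 < s" "s \<le> 1" for s
    proof -
      define x' where "x' = (\<lambda>k. if k \<in> B then x k + s *\<^sub>R \<delta> k else x k)"
      define y' where "y' = (\<lambda>k. if k \<in> B then x k + \<delta> k else x k)"
      have x'eq: "x' = (\<lambda>k. x k + s *\<^sub>R (y' k - x k))"
        by (auto simp: x'_def y'_def)
      have "Qsum I w a x' = Qsum I w a x + 2 * s * (\<Sum>k\<in>I. w k * ((x k - a k) \<bullet> (y' k - x k)))
           + s^2 * (\<Sum>k\<in>I. w k * (norm (y' k - x k))^2)"
        unfolding x'eq by (rule Qsum_line)
      also have "(\<Sum>k\<in>I. w k * ((x k - a k) \<bullet> (y' k - x k))) = (\<Sum>k\<in>B. w k * ((z - a k) \<bullet> \<delta> k))"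
        by (subst sum_if_sub[OF I BI, symmetric]) (auto simp: y'_def xB intro!: sum.cong)
      also have "(\<Sum>k\<in>I. w k * (norm (y' k - x k))^2) = NB"
        unfolding NB_def by (subst sum_if_sub[OF I BI, symmetric]) (auto simp: y'_def intro!: sum.cong)
      finally have Qx': "Qsum I w a x' = Qsum I w a x - 2 * s * A + s^2 * NB" using zterm by simp
      have Dx': "Dsum I w x' \<le> Dsum I w x + s * W + s^2 * (2 * K)"
      proof -
        have bb: "(\<Sum>i\<in>B. \<Sum>j\<in>B. w i * w j * norm (x' i - x' j)) = s * W"
        proof -
          have "x' i - x' j = s *\<^sub>R (y i - y j)" if "i \<in> B" "j \<in> B" for i j
            using that xB by (simp add: x'_def \<delta>_def algebra_simps)
          then have "(\<Sum>i\<in>B. \<Sum>j\<in>B. w i * w j * norm (x' i - x' j)) = (\<Sum>i\<in>B. \<Sum>j\<in>B. s * (w i * w j * norm (y i - y j)))"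
            using s by (intro sum.cong refl) (simp add: abs_of_pos)
          then show ?thesis by (simp add: W_def sum_distrib_left)
        qed
        have bbx: "(\<Sum>i\<in>B. \<Sum>j\<in>B. w i * w j * norm (x i - x j)) = 0"
          using xB by simp
        have cr: "(\<Sum>i\<in>B. w i * norm (x' i - x' j)) \<le> (\<Sum>i\<in>B. w i * norm (x i - x j)) + s^2 * (NB / (2 * norm (z - x j)))"
          if j: "j \<in> I - B" for j
        proof -
          have N: "norm (z - x j) > 0" using xnB[OF j] by simp
          have "(\<Sum>i\<in>B. w i * norm (x' i - x' j)) = (\<Sum>i\<in>B. w i * norm ((z - x j) + s *\<^sub>R \<delta> i))"
            using j xB by (intro sum.cong refl) (simp add: x'_def algebra_simps)
          also have "\<dots> \<le> wB * norm (z - x j) + s^2 * NB / (2 * norm (z - x j))"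
            unfolding wB_def NB_def using cross[OF fB N w0B sd, of s] s by simp
          also have "wB * norm (z - x j) = (\<Sum>i\<in>B. w i * norm (x i - x j))"
            unfolding wB_def using xB by (simp add: sum_distrib_right)
          finally show ?thesis by simp
        qed
        have crs: "(\<Sum>j\<in>I-B. w j * (\<Sum>i\<in>B. w i * norm (x' i - x' j)))
            \<le> (\<Sum>j\<in>I-B. w j * (\<Sum>i\<in>B. w i * norm (x i - x j))) + s^2 * K"
        proof -
          have "(\<Sum>j\<in>I-B. w j * (\<Sum>i\<in>B. w i * norm (x' i - x' j)))
            \<le> (\<Sum>j\<in>I-B. w j * ((\<Sum>i\<in>B. w i * norm (x i - x j)) + s^2 * (NB / (2 * norm (z - x j)))))"
            using cr w0 by (intro sum_mono mult_left_mono) auto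
          also have "\<dots> = (\<Sum>j\<in>I-B. w j * (\<Sum>i\<in>B. w i * norm (x i - x j))) + s^2 * K"
            unfolding K_def by (simp add: algebra_simps sum.distrib sum_distrib_left)
          finally show ?thesis .
        qed
        have rest: "(\<Sum>i\<in>I-B. \<Sum>j\<in>I-B. w i * w j * norm (x' i - x' j)) = (\<Sum>i\<in>I-B. \<Sum>j\<in>I-B. w i * w j * norm (x i - x j))"
          by (intro sum.cong refl) (simp add: x'_def)
        show ?thesis unfolding dsplit2[OF I BI, of w x'] dsplit2[OF I BI, of w x] bb bbx rest
          using crs by simp
      qed
      have "cc_obj I w a mu x \<le> cc_obj I w a mu x'" by (rule mx)
      then have "Qsum I w a x / 2 + mu / 2 * Dsum I w x \<le> Qsum I w a x' / 2 + mu / 2 * Dsum I w x'"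
        by (simp add: obj_eq[OF I])
      also have "\<dots> \<le> Qsum I w a x' / 2 + mu / 2 * (Dsum I w x + s * W + s^2 * (2 * K))"
        using Dx' mu by (intro add_left_mono mult_left_mono) auto
      finally have ineq: "Qsum I w a x / 2 + mu / 2 * Dsum I w x \<le>
          (Qsum I w a x - 2 * s * A + s^2 * NB) / 2 + mu / 2 * (Dsum I w x + s * W + s^2 * (2 * K))"
        unfolding Qx' .
      have "(Qsum I w a x - 2 * s * A + s^2 * NB) / 2 + mu / 2 * (Dsum I w x + s * W + s^2 * (2 * K))
          = Qsum I w a x / 2 + mu / 2 * Dsum I w x + s * (mu/2 * W + s * (NB/2 + mu * K)) - s * A"
        by (simp add: field_simps power2_eq_square)
      then have "s * A \<le> s * (mu/2 * W + s * (NB/2 + mu * K))" using ineq by linarith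
      then show ?thesis using s by simp
    qed
    show ?thesis
      by (rule eps_lemma[of "NB/2 + mu * K"]) (use NBn Kn mu step in auto)
  qed
  define y' where "y' = (\<lambda>k. if k \<in> B then yb else y k)"
  have "Qsum I w a y = Qsum I w a y' + 2 * 1 * (\<Sum>k\<in>I. w k * ((y' k - a k) \<bullet> (y k - y' k)))
           + 1^2 * (\<Sum>k\<in>I. w k * (norm (y k - y' k))^2)"
    using Qsum_line[where x=y' and y=y and s=1 and I=I and w=w and c=a] by simp
  also have "(\<Sum>k\<in>I. w k * ((y' k - a k) \<bullet> (y k - y' k))) = (\<Sum>k\<in>B. w k * ((yb - a k) \<bullet> \<delta> k))"
    by (subst sum_if_sub[OF I BI, symmetric]) (auto simp: y'_def \<delta>_def intro!: sum.cong)
  also have "(\<Sum>k\<in>I. w k * (norm (y k - y' k))^2) = NB"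
    unfolding NB_def by (subst sum_if_sub[OF I BI, symmetric]) (auto simp: y'_def \<delta>_def intro!: sum.cong)
  finally have Qy: "Qsum I w a y = Qsum I w a y' - 2 * A + NB" using zterm by simp
  have Dy: "Dsum I w y' + W \<le> Dsum I w y"
  proof -
    have bb: "(\<Sum>i\<in>B. \<Sum>j\<in>B. w i * w j * norm (y' i - y' j)) = 0" by (simp add: y'_def)
    have cr: "(\<Sum>j\<in>I-B. w j * (\<Sum>i\<in>B. w i * norm (y' i - y' j))) \<le> (\<Sum>j\<in>I-B. w j * (\<Sum>i\<in>B. w i * norm (y i - y j)))"
    proof -
      have inner: "(\<Sum>i\<in>B. w i * norm (y' i - y' j)) \<le> (\<Sum>i\<in>B. w i * norm (y i - y j))" if j: "j \<in> I - B" for j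
      proof -
        have "(\<Sum>i\<in>B. w i * norm (y' i - y' j)) = (\<Sum>i\<in>B. w i * norm (yb - y j))"
          using j by (intro sum.cong refl) (simp add: y'_def)
        also have "\<dots> \<le> (\<Sum>i\<in>B. w i * norm (y i - y j))"
          using avg_le[OF fB w0B, where yb=yb and y=y and u="y j"] ybeq unfolding wB_def by simp
        finally show ?thesis .
      qed
      show ?thesis by (rule sum_mono, rule mult_left_mono[OF inner]) (auto intro: w0)
    qed
    have rest: "(\<Sum>i\<in>I-B. \<Sum>j\<in>I-B. w i * w j * norm (y' i - y' j)) = (\<Sum>i\<in>I-B. \<Sum>j\<in>I-B. w i * w j * norm (y i - y j))"
      by (intro sum.cong refl) (simp add: y'_def)
    show ?thesis unfolding dsplit2[OF I BI, of w y'] dsplit2[OF I BI, of w y] bb rest W_def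
      using cr by simp
  qed
  have "cc_obj I w a nu y \<le> cc_obj I w a nu y'" by (rule my)
  then have "Qsum I w a y / 2 + nu / 2 * Dsum I w y \<le> Qsum I w a y' / 2 + nu / 2 * Dsum I w y'"
    by (simp add: obj_eq[OF I])
  moreover have "nu / 2 * (Dsum I w y' + W) \<le> nu / 2 * Dsum I w y"
    using Dy mu nu by (intro mult_left_mono) auto
  moreover have "(nu - mu) * W \<ge> 0" using nu Wn by simp
  ultimately have "NB \<le> 0" using FO unfolding Qy by (simp add: algebra_simps) argo
  then have NB0: "NB = 0" using NBn by simp
  have "w k * (norm (\<delta> k))^2 = 0" if "k \<in> B" for k
    using sum_nonneg_eq_0_iff[OF fB, of "\<lambda>k. w k * (norm (\<delta> k))^2"] NB0 w0B that
    unfolding NB_def by simp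
  then have "\<delta> k = 0" if "k \<in> B" for k using that w BI by fastforce
  then show ?thesis using i0B j0B by (simp add: \<delta>_def)
qed

lemma qsplit:
  fixes z :: "'a::real_inner" and a :: "nat \<Rightarrow> 'a"
  assumes "finite C" "(\<Sum>i\<in>C. r i) > 0"
  shows "(\<Sum>i\<in>C. r i * (norm (z - a i))^2)
     = (\<Sum>i\<in>C. r i) * (norm (z - (1 / (\<Sum>i\<in>C. r i)) *\<^sub>R (\<Sum>i\<in>C. r i *\<^sub>R a i)))^2
       + ((\<Sum>i\<in>C. r i * (norm (a i))^2) - (\<Sum>i\<in>C. r i) * (norm ((1 / (\<Sum>i\<in>C. r i)) *\<^sub>R (\<Sum>i\<in>C. r i *\<^sub>R a i)))^2)"
proof -
  define w where "w = (\<Sum>i\<in>C. r i)"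
  define c where "c = (1 / w) *\<^sub>R (\<Sum>i\<in>C. r i *\<^sub>R a i)"
  have wc: "w *\<^sub>R c = (\<Sum>i\<in>C. r i *\<^sub>R a i)" using assms(2) by (simp add: c_def w_def)
  have e1: "(norm (z - a i))^2 = (norm z)^2 - 2 * (z \<bullet> a i) + (norm (a i))^2" for i
    unfolding power2_norm_eq_inner by (simp add: inner_diff_left inner_diff_right inner_commute)
  have e2: "(norm (z - c))^2 = (norm z)^2 - 2 * (z \<bullet> c) + (norm c)^2"
    unfolding power2_norm_eq_inner by (simp add: inner_diff_left inner_diff_right inner_commute)
  have e3: "(\<Sum>i\<in>C. r i * (z \<bullet> a i)) = w * (z \<bullet> c)"
  proof -
    have "(\<Sum>i\<in>C. r i * (z \<bullet> a i)) = z \<bullet> (\<Sum>i\<in>C. r i *\<^sub>R a i)" by (simp add: inner_sum_right)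
    also have "\<dots> = w * (z \<bullet> c)" unfolding wc[symmetric] by simp
    finally show ?thesis .
  qed
  have "(\<Sum>i\<in>C. r i * (norm (z - a i))^2) = w * (norm z)^2 - 2 * (\<Sum>i\<in>C. r i * (z \<bullet> a i)) + (\<Sum>i\<in>C. r i * (norm (a i))^2)"
    unfolding e1 by (simp add: algebra_simps sum.distrib sum_subtractf sum_distrib_left sum_distrib_right w_def)
  also have "\<dots> = w * (norm (z - c))^2 + ((\<Sum>i\<in>C. r i * (norm (a i))^2) - w * (norm c)^2)"
    unfolding e3 e2 by (simp add: algebra_simps)
  finally show ?thesis unfolding w_def c_def .
qed

lemma group_cl:
  fixes f :: "nat \<Rightarrow> nat \<Rightarrow> real"
  assumes cl: "\<And>i. i < n \<Longrightarrow> cl i < K \<and> i \<in> C (cl i)"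
    and Csub: "\<And>k. k < K \<Longrightarrow> C k \<subseteq> {..<n}"
    and disj: "\<And>k k'. k < K \<Longrightarrow> k' < K \<Longrightarrow> k \<noteq> k' \<Longrightarrow> C k \<inter> C k' = {}"
  shows "(\<Sum>i\<in>{..<n}. f i (cl i)) = (\<Sum>k\<in>{..<K}. \<Sum>i\<in>C k. f i k)"
proof -
  have Ck: "{i \<in> {..<n}. cl i = k} = C k" if k: "k < K" for k
  proof
    show "{i \<in> {..<n}. cl i = k} \<subseteq> C k" using cl by auto
    show "C k \<subseteq> {i \<in> {..<n}. cl i = k}"
    proof
      fix i assume i: "i \<in> C k"
      then have "i < n" using Csub[OF k] by auto
      with cl have "cl i < K" "i \<in> C (cl i)" by auto
      then have "cl i = k" using disj[of k "cl i"] k i by blast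
      then show "i \<in> {i \<in> {..<n}. cl i = k}" using \<open>i < n\<close> by auto
    qed
  qed
  have "(\<Sum>i\<in>{..<n}. f i (cl i)) = (\<Sum>k\<in>{..<K}. \<Sum>i\<in>{i \<in> {..<n}. cl i = k}. f i (cl i))"
    using cl by (intro sum.group[symmetric]) auto
  also have "\<dots> = (\<Sum>k\<in>{..<K}. \<Sum>i\<in>C k. f i k)"
  proof (rule sum.cong[OF refl])
    fix k assume k: "k \<in> {..<K}"
    have e: "{i \<in> {..<n}. cl i = k} = C k" using Ck k by simp
    have "(\<Sum>i\<in>{i \<in> {..<n}. cl i = k}. f i (cl i)) = (\<Sum>i\<in>{i \<in> {..<n}. cl i = k}. f i k)"
      by (rule sum.cong) auto
    also have "\<dots> = (\<Sum>i\<in>C k. f i k)" by (simp only: e)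
    finally show "(\<Sum>i\<in>{i \<in> {..<n}. cl i = k}. f i (cl i)) = (\<Sum>i\<in>C k. f i k)" .
  qed
  finally show ?thesis .
qed

lemma reduce:
  fixes a h :: "nat \<Rightarrow> 'a::real_inner"
  assumes cl: "\<And>i. i < n \<Longrightarrow> cl i < K \<and> i \<in> C (cl i)"
    and Csub: "\<And>k. k < K \<Longrightarrow> C k \<subseteq> {..<n}"
    and disj: "\<And>k k'. k < K \<Longrightarrow> k' < K \<Longrightarrow> k \<noteq> k' \<Longrightarrow> C k \<inter> C k' = {}"
    and wpos: "\<And>k. k < K \<Longrightarrow> red_w r C k > 0"
  shows "cc_obj {..<n} r a lam (\<lambda>i. h (cl i)) = cc_obj {..<K} (red_w r C) (red_a r a C) lam h
     + (\<Sum>k\<in>{..<K}. (\<Sum>i\<in>C k. r i * (norm (a i))^2) - red_w r C k * (norm (red_a r a C k))^2) / 2"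
proof -
  note G = group_cl[OF cl Csub disj]
  have fin: "finite (C k)" if "k < K" for k using Csub[OF that] finite_subset by blast
  have Q: "Qsum {..<n} r a (\<lambda>i. h (cl i)) = Qsum {..<K} (red_w r C) (red_a r a C) h
     + (\<Sum>k\<in>{..<K}. (\<Sum>i\<in>C k. r i * (norm (a i))^2) - red_w r C k * (norm (red_a r a C k))^2)"
  proof -
    have "Qsum {..<n} r a (\<lambda>i. h (cl i)) = (\<Sum>k\<in>{..<K}. \<Sum>i\<in>C k. r i * (norm (h k - a i))^2)"
      unfolding Qsum_def by (rule G)
    also have "\<dots> = (\<Sum>k\<in>{..<K}. red_w r C k * (norm (h k - red_a r a C k))^2
        + ((\<Sum>i\<in>C k. r i * (norm (a i))^2) - red_w r C k * (norm (red_a r a C k))^2))"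
    proof (intro sum.cong refl)
      fix k assume "k \<in> {..<K}"
      then have k: "k < K" by simp
      show "(\<Sum>i\<in>C k. r i * (norm (h k - a i))^2) = red_w r C k * (norm (h k - red_a r a C k))^2
        + ((\<Sum>i\<in>C k. r i * (norm (a i))^2) - red_w r C k * (norm (red_a r a C k))^2)"
        unfolding red_w_def red_a_def by (rule qsplit[OF fin[OF k] wpos[OF k, unfolded red_w_def]])
    qed
    finally show ?thesis unfolding Qsum_def by (simp add: sum.distrib)
  qed
  have D: "Dsum {..<n} r (\<lambda>i. h (cl i)) = Dsum {..<K} (red_w r C) h"
  proof -
    have inner: "(\<Sum>j\<in>{..<n}. r i * r j * norm (h (cl i) - h (cl j)))
        = (\<Sum>k'\<in>{..<K}. r i * red_w r C k' * norm (h (cl i) - h k'))" for i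
      using G[of "\<lambda>j k'. r i * r j * norm (h (cl i) - h k')"]
      by (simp add: red_w_def sum_distrib_left sum_distrib_right mult_ac)
    have "Dsum {..<n} r (\<lambda>i. h (cl i)) = (\<Sum>i\<in>{..<n}. \<Sum>k'\<in>{..<K}. r i * red_w r C k' * norm (h (cl i) - h k'))"
      unfolding Dsum_def inner ..
    also have "\<dots> = (\<Sum>k\<in>{..<K}. \<Sum>i\<in>C k. \<Sum>k'\<in>{..<K}. r i * red_w r C k' * norm (h k - h k'))"
      by (rule G[of "\<lambda>i k. \<Sum>k'\<in>{..<K}. r i * red_w r C k' * norm (h k - h k')"])
    also have "\<dots> = Dsum {..<K} (red_w r C) h"
      unfolding Dsum_def
    proof (rule sum.cong[OF refl])
      fix k
      show "(\<Sum>i\<in>C k. \<Sum>k'\<in>{..<K}. r i * red_w r C k' * norm (h k - h k'))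
          = (\<Sum>k'\<in>{..<K}. red_w r C k * red_w r C k' * norm (h k - h k'))"
        by (subst sum.swap) (simp add: red_w_def sum_distrib_right mult.assoc)
    qed
    finally show ?thesis .
  qed
  show ?thesis unfolding obj_eq[OF finite_lessThan] Q D by (simp add: add_divide_distrib)
qed

theorem lemma6p3:
  fixes n K :: nat and r :: "nat \<Rightarrow> real" and a :: "nat \<Rightarrow> 'a::euclidean_space"
    and lam lam1 :: real and C :: "nat \<Rightarrow> nat set" and xh :: "nat \<Rightarrow> 'a"
  assumes "n \<ge> 2"
    and "\<forall>i<n. r i > 0"
    and "lam > 0"
    and "\<not> fusion_value n r a lam"
    and "(fusion_value n r a lam1 \<and> lam1 < lam \<and>
            (\<forall>mu. fusion_value n r a mu \<longrightarrow> \<not> (lam1 < mu \<and> mu < lam)))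
         \<or> (lam1 = 0 \<and> (\<forall>mu. fusion_value n r a mu \<longrightarrow> \<not> mu < lam))"
    and "bij_betw C {..<K} (clusters n (cc_sol n r a lam1))"
    and "\<forall>y. cc_obj {..<K} (red_w r C) (red_a r a C) lam xh
              \<le> cc_obj {..<K} (red_w r C) (red_a r a C) lam y"
  shows "\<forall>k<K. \<forall>k'<K. k \<noteq> k' \<longrightarrow> xh k \<noteq> xh k'"
proof -
  note r = assms(2)
  define sol where "sol = cc_sol n r a"
  have I: "finite {..<n}" by simp
  have rI: "\<And>i. i \<in> {..<n} \<Longrightarrow> r i > 0" using r by auto
  have rI0: "\<And>i. i \<in> {..<n} \<Longrightarrow> r i \<ge> 0" using r by (auto intro: less_imp_le)
  have smin: "\<And>z. cc_obj {..<n} r a mu (sol mu) \<le> cc_obj {..<n} r a mu z" if "mu \<ge> 0" for mu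
    using sol_min[OF r that] unfolding is_min_def sol_def by blast
  have l1: "0 \<le> lam1" "lam1 < lam" using assms(3,5) unfolding fusion_value_def by auto
  have NS: "sol nu i = sol nu j" if "0 \<le> mu" "mu \<le> nu" "i < n" "j < n" "sol mu i = sol mu j" for mu nu i j
    using no_split[OF I rI that(1,2) smin[OF that(1)] smin, of i j] that by auto
  define X1 where "X1 = sol lam1"
  define Rel where "Rel = {(i,j). i < n \<and> j < n \<and> X1 i = X1 j}"
  have eqv: "equiv {..<n} Rel" unfolding equiv_def refl_on_def sym_def trans_def Rel_def by auto
  have cls: "clusters n X1 = {..<n} // Rel" unfolding clusters_def Rel_def by simp
  have bij: "bij_betw C {..<K} ({..<n} // Rel)" using assms(6) cls unfolding X1_def sol_def by simp
  have Cin: "C k \<in> {..<n} // Rel" if "k < K" for k using bij that by (auto dest: bij_betw_apply)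
  have Cne: "C k \<noteq> {}" if "k < K" for k using in_quotient_imp_non_empty[OF eqv Cin[OF that]] .
  have Csub: "C k \<subseteq> {..<n}" if "k < K" for k
    using Union_quotient[OF eqv] Cin[OF that] by blast
  have disj: "C k \<inter> C k' = {}" if "k < K" "k' < K" "k \<noteq> k'" for k k'
  proof -
    have "C k \<noteq> C k'" using bij that unfolding bij_betw_def inj_on_def by auto
    then show ?thesis using quotient_disj[OF eqv Cin[OF that(1)] Cin[OF that(2)]] by auto
  qed
  have Crel: "X1 i = X1 j" if "k < K" "i \<in> C k" "j \<in> C k" for k i j
    using in_quotient_imp_in_rel[OF eqv Cin[OF that(1)], of i j] that unfolding Rel_def by auto
  have Cclosed: "j \<in> C k" if "k < K" "i \<in> C k" "j < n" "X1 i = X1 j" for k i j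
    using in_quotient_imp_closed[OF eqv Cin[OF that(1)] that(2), of j] that Csub[OF that(1)]
    unfolding Rel_def by auto
  have exk: "\<exists>!k. k < K \<and> i \<in> C k" if "i < n" for i
  proof -
    have "i \<in> \<Union>({..<n} // Rel)" using Union_quotient[OF eqv] that by simp
    then obtain Y where "Y \<in> {..<n} // Rel" "i \<in> Y" by blast
    then obtain k where "k < K" "C k = Y" using bij unfolding bij_betw_def by (metis imageE lessThan_iff)
    then show ?thesis using \<open>i \<in> Y\<close> disj by blast
  qed
  define cl where "cl i = (THE k. k < K \<and> i \<in> C k)" for i
  have cl: "cl i < K \<and> i \<in> C (cl i)" if "i < n" for i
    using theI'[OF exk[OF that]] unfolding cl_def by blast
  have cl_eq: "cl i = k" if "k < K" "i \<in> C k" for i k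
  proof -
    have "i < n" using Csub that by auto
    then show ?thesis using cl[of i] disj[of k "cl i"] that by blast
  qed
  have wpos: "red_w r C k > 0" if "k < K" for k
  proof -
    have "finite (C k)" using Csub[OF that] finite_subset by blast
    then show ?thesis unfolding red_w_def using Cne[OF that] Csub[OF that] r by (intro sum_pos) auto
  qed
  note red = reduce[OF cl Csub disj wpos]
  define X where "X = sol lam"
  have lam0: "0 \<le> lam" using assms(3) by simp
  have Xc: "X i = X j" if "k < K" "i \<in> C k" "j \<in> C k" for k i j
    using NS[OF l1(1) less_imp_le[OF l1(2)], of i j] Crel[OF that] Csub[OF that(1)] that
    unfolding X_def X1_def by auto
  define Xh where "Xh k = X (SOME i. i \<in> C k)" for k
  have XXh: "X i = Xh (cl i)" if "i < n" for i
  proof -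
    have "(SOME j. j \<in> C (cl i)) \<in> C (cl i)" using cl[OF that] by (meson someI)
    then show ?thesis unfolding Xh_def using Xc cl[OF that] by blast
  qed
  define E where "E = (\<Sum>k\<in>{..<K}. (\<Sum>i\<in>C k. r i * (norm (a i))^2) - red_w r C k * (norm (red_a r a C k))^2) / 2"
  have Lmin: "cc_obj {..<n} r a lam (\<lambda>i. xh (cl i)) \<le> cc_obj {..<n} r a lam z" for z
  proof -
    have "cc_obj {..<n} r a lam (\<lambda>i. xh (cl i)) = cc_obj {..<K} (red_w r C) (red_a r a C) lam xh + E"
      unfolding E_def by (rule red)
    also have "\<dots> \<le> cc_obj {..<K} (red_w r C) (red_a r a C) lam Xh + E" using assms(7) by simp
    also have "\<dots> = cc_obj {..<n} r a lam (\<lambda>i. Xh (cl i))" unfolding E_def by (rule red[symmetric])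
    also have "\<dots> = cc_obj {..<n} r a lam X" by (rule obj_cong) (auto simp: XXh)
    also have "\<dots> \<le> cc_obj {..<n} r a lam z" unfolding X_def by (rule smin[OF lam0])
    finally show ?thesis .
  qed
  have LX: "xh (cl i) = X i" if "i < n" for i
    using min_unique[OF I rI lam0 Lmin, of X i] smin[OF lam0] that unfolding X_def by auto
  show ?thesis
  proof (intro allI impI)
    fix k k' assume k: "k < K" and k': "k' < K" and kk: "k \<noteq> k'"
    show "xh k \<noteq> xh k'"
    proof
      assume eqh: "xh k = xh k'"
      obtain i where i: "i \<in> C k" using Cne[OF k] by blast
      obtain j where j: "j \<in> C k'" using Cne[OF k'] by blast
      have i_n: "i < n" and j_n: "j < n" using Csub k k' i j by auto
      have Xij: "sol lam i = sol lam j"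
        using LX[OF i_n] LX[OF j_n] cl_eq[OF k i] cl_eq[OF k' j] eqh unfolding X_def by simp
      have ij: "i \<noteq> j" using disj[OF k k' kk] i j by auto
      have X1ij: "sol lam1 i \<noteq> sol lam1 j"
      proof
        assume "sol lam1 i = sol lam1 j"
        then have "j \<in> C k" using Cclosed[OF k i j_n] unfolding X1_def by simp
        then show False using disj[OF k k' kk] j by auto
      qed
      define S where "S = {mu. 0 \<le> mu \<and> sol mu i = sol mu j}"
      define t where "t = Inf S"
      have lamS: "lam \<in> S" unfolding S_def using lam0 Xij by simp
      have bdd: "bdd_below S" unfolding S_def by (rule bdd_belowI[of _ 0]) auto
      have Sne: "S \<noteq> {}" using lamS by auto
      have tle: "t \<le> mu" if "mu \<in> S" for mu unfolding t_def by (rule cInf_lower[OF that bdd])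
      have t0: "0 \<le> t" unfolding t_def by (rule cInf_greatest[OF Sne]) (auto simp: S_def)
      have tS: "sol t i = sol t j"
      proof -
        define Dt where "Dt = Dsum {..<n} r (sol t)"
        define M where "M = 2 * Dt * (1 / r i + 1 / r j)"
        have Dt: "Dt \<ge> 0" unfolding Dt_def by (rule Dsum_nonneg[OF rI0])
        have ri: "r i > 0" "r j > 0" using r i_n j_n by auto
        have M: "M \<ge> 0" unfolding M_def using Dt ri by simp
        have bnd: "(norm (sol t i - sol t j))^2 \<le> 0 + e * M" if e: "0 < e" "e \<le> 1" for e
        proof -
          have "\<exists>nu\<in>S. nu < t + e" using cInf_less_iff[OF Sne bdd, of "t + e"] e unfolding t_def by simp
          then obtain nu where nu: "nu \<in> S" "nu < t + e" by blast
          have tn: "t \<le> nu" using tle[OF nu(1)] .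
          have nuij: "sol nu i = sol nu j" using nu(1) unfolding S_def by simp
          define N where "N = (\<Sum>k\<in>{..<n}. r k * (norm (sol nu k - sol t k))^2)"
          have NB: "N \<le> (nu - t) * Dt" unfolding N_def Dt_def
            by (rule cont_bound[OF I rI0 t0 tn smin[OF t0]]) (use t0 tn in \<open>auto intro: smin\<close>)
          have Ni: "r i * (norm (sol nu i - sol t i))^2 \<le> N"
            unfolding N_def using i_n rI0 by (intro member_le_sum) auto
          have Nj: "r j * (norm (sol nu j - sol t j))^2 \<le> N"
            unfolding N_def using j_n rI0 by (intro member_le_sum) auto
          have "(norm (sol nu i - sol t i))^2 \<le> N / r i" using Ni ri by (simp add: le_divide_eq mult.commute)
          moreover have "(norm (sol nu j - sol t j))^2 \<le> N / r j" using Nj ri by (simp add: le_divide_eq mult.commute)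
          moreover have "norm (sol t i - sol t j) \<le> norm (sol nu i - sol t i) + norm (sol nu j - sol t j)"
          proof -
            have "sol t i - sol t j = (sol nu j - sol t j) - (sol nu i - sol t i)" using nuij by simp
            then show ?thesis by (metis add.commute norm_triangle_ineq4)
          qed
          ultimately have "(norm (sol t i - sol t j))^2 \<le> 2 * (N / r i + N / r j)"
          proof -
            assume h1: "(norm (sol nu i - sol t i))^2 \<le> N / r i"
              and h2: "(norm (sol nu j - sol t j))^2 \<le> N / r j"
              and h3: "norm (sol t i - sol t j) \<le> norm (sol nu i - sol t i) + norm (sol nu j - sol t j)"
            define p where "p = norm (sol nu i - sol t i)"
            define q where "q = norm (sol nu j - sol t j)"
            have "(norm (sol t i - sol t j))^2 \<le> (p + q)^2"
              using h3 unfolding p_def q_def by (intro power_mono) auto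
            also have "(p + q)^2 \<le> 2 * (p^2 + q^2)"
            proof -
              have "0 \<le> (p - q)^2" by simp
              then show ?thesis by (simp add: power2_eq_square algebra_simps)
            qed
            also have "2 * (p^2 + q^2) \<le> 2 * (N / r i + N / r j)"
              using h1 h2 unfolding p_def q_def by (intro mult_left_mono add_mono) auto
            finally show ?thesis .
          qed
          also have "\<dots> = 2 * N * (1 / r i + 1 / r j)" by (simp add: field_simps)
          also have "\<dots> \<le> 2 * ((nu - t) * Dt) * (1 / r i + 1 / r j)"
            using NB ri by (intro mult_right_mono mult_left_mono) auto
          also have "\<dots> \<le> e * M"
          proof -
            have "(nu - t) * Dt \<le> e * Dt" using nu(2) tn Dt by (intro mult_right_mono) auto
            then have "2 * ((nu - t) * Dt) * (1 / r i + 1 / r j) \<le> 2 * (e * Dt) * (1 / r i + 1 / r j)"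
              using ri by (intro mult_right_mono) auto
            then show ?thesis unfolding M_def by (simp add: mult_ac)
          qed
          finally show ?thesis by simp
        qed
        have "(norm (sol t i - sol t j))^2 \<le> 0" by (rule eps_lemma[OF M bnd]) auto
        then show ?thesis by simp
      qed
      have tgt: "lam1 < t"
      proof (rule ccontr)
        assume "\<not> lam1 < t"
        then have "sol lam1 i = sol lam1 j" using NS[OF t0 _ i_n j_n tS] by simp
        with X1ij show False by simp
      qed
      have fv: "fusion_value n r a t"
        unfolding fusion_value_def
      proof (intro conjI)
        show "0 < t" using tgt l1 by simp
        show "\<exists>i<n. \<exists>j<n. i \<noteq> j \<and> cc_sol n r a t i = cc_sol n r a t j \<and>
          (\<forall>lam. 0 \<le> lam \<and> lam < t \<longrightarrow> cc_sol n r a lam i \<noteq> cc_sol n r a lam j)"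
        proof (intro exI conjI allI impI)
          show "i < n" "j < n" "i \<noteq> j" by (fact i_n, fact j_n, fact ij)
          show "cc_sol n r a t i = cc_sol n r a t j" using tS unfolding sol_def .
          fix mu assume mu: "0 \<le> mu \<and> mu < t"
          show "cc_sol n r a mu i \<noteq> cc_sol n r a mu j"
          proof
            assume "cc_sol n r a mu i = cc_sol n r a mu j"
            then have "mu \<in> S" using mu unfolding S_def sol_def by simp
            then show False using tle mu by force
          qed
        qed
      qed
      have tl: "t \<le> lam" by (rule tle[OF lamS])
      show False
      proof (cases "t = lam")
        case True then show False using fv assms(4) by simp
      next
        case False
        then have "t < lam" using tl by simp
        then show False using assms(5) fv tgt by auto
      qed
    qed
  qed
qed

end
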